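(* Let $P$ be a pair of pants. Then $\mathrm{rep}(\pi_1(P),\mathrm{SO}(3))$ is homeomorphic to the quotient of the closed tetrahedron $G\subset\mathbb R^3$ with vertices $(\pi,0,0),(0,\pi,0),(0,0,\pi),(\pi,\pi,\pi)$ by the action of the Klein four-group $V=\{I,I_A,I_B,I_C\}$, where $$I_A(\theta_0,\theta_1,\theta_2)=(\theta_0,\pi-\theta_1,\pi-\theta_2),\quad I_B(\theta_0,\theta_1,\theta_2)=(\pi-\theta_0,\theta_1,\pi-\theta_2),\quad I_C(\theta_0,\theta_1,\theta_2)=(\pi-\theta_0,\pi-\theta_1,\theta_2).$$
   Context: $\mathrm{rep}(\pi_1(P),\mathrm{SO}(3))=\mathrm{Hom}(\pi_1(P),\mathrm{SO}(3))/\mathrm{SO}(3)$ with the conjugation action and quotient topology. $G$ is the set $\{\theta_0+\theta_1+\theta_2\ge\pi,\ \theta_i\le\theta_{i+1}+\theta_{i+2}-\pi,\ i\in\mathbb Z_3\}$; each $I_A,I_B,I_C$ is an involutive rotation of $G$ about an axis through $(\pi/2,\pi/2,\pi/2)$ parallel to a coordinate axis. *)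

theory Defs
  imports "HOL-Analysis.Analysis"
begin

definition rel_class :: "'a topology \<Rightarrow> ('a \<Rightarrow> 'a \<Rightarrow> bool) \<Rightarrow> 'a \<Rightarrow> 'a set" where
  "rel_class X r x = {y \<in> topspace X. r x y}"

definition quotient_topology :: "'a topology \<Rightarrow> ('a \<Rightarrow> 'a \<Rightarrow> bool) \<Rightarrow> 'a set topology" where
  "quotient_topology X r = topology (\<lambda>U. U \<subseteq> rel_class X r ` topspace X \<and>
      openin X {x \<in> topspace X. rel_class X r x \<in> U})"

lemma istopology_quotient:
  "istopology (\<lambda>U. U \<subseteq> rel_class X r ` topspace X \<and>
      openin X {x \<in> topspace X. rel_class X r x \<in> U})"
proof -
  have i: "{x \<in> topspace X. rel_class X r x \<in> S \<inter> T} =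
        {x \<in> topspace X. rel_class X r x \<in> S} \<inter> {x \<in> topspace X. rel_class X r x \<in> T}"
    for S T :: "'a set set" by blast
  have u: "{x \<in> topspace X. rel_class X r x \<in> \<Union>K} = (\<Union>U\<in>K. {x \<in> topspace X. rel_class X r x \<in> U})"
    for K :: "'a set set set" by blast
  show ?thesis unfolding istopology_def
    by (auto simp only: i u intro!: openin_Int openin_Union)
qed

type_synonym mat3 = "real^3^3"

definition SO3 :: "mat3 set" where
  "SO3 = {A. orthogonal_matrix A \<and> det A = 1}"

text \<open>pi_1 of the pair of pants: <a, b, c | a b c = 1> (free of rank 2, generated by the
  three boundary loops). Hom(pi_1(P), SO(3)) is identified with the triples of images,
  with the subspace topology of SO(3)^3 (compact-open = pointwise on generators).\<close>
definition hom_pants_SO3 :: "(mat3 \<times> mat3 \<times> mat3) set" where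
  "hom_pants_SO3 = {(A, B, C). A \<in> SO3 \<and> B \<in> SO3 \<and> C \<in> SO3 \<and> A ** B ** C = mat 1}"

definition conj_rel :: "(mat3 \<times> mat3 \<times> mat3) \<Rightarrow> (mat3 \<times> mat3 \<times> mat3) \<Rightarrow> bool" where
  "conj_rel = (\<lambda>(A, B, C) (A', B', C'). \<exists>g \<in> SO3.
      A' = g ** A ** matrix_inv g \<and> B' = g ** B ** matrix_inv g \<and> C' = g ** C ** matrix_inv g)"

definition rep_pants_SO3 :: "(mat3 \<times> mat3 \<times> mat3) set topology" where
  "rep_pants_SO3 = quotient_topology (subtopology euclidean hom_pants_SO3) conj_rel"

definition tetG :: "(real \<times> real \<times> real) set" where
  "tetG = convex hull {(pi, 0, 0), (0, pi, 0), (0, 0, pi), (pi, pi, pi)}"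

definition I_A :: "real \<times> real \<times> real \<Rightarrow> real \<times> real \<times> real" where
  "I_A = (\<lambda>(t0, t1, t2). (t0, pi - t1, pi - t2))"
definition I_B :: "real \<times> real \<times> real \<Rightarrow> real \<times> real \<times> real" where
  "I_B = (\<lambda>(t0, t1, t2). (pi - t0, t1, pi - t2))"
definition I_C :: "real \<times> real \<times> real \<Rightarrow> real \<times> real \<times> real" where
  "I_C = (\<lambda>(t0, t1, t2). (pi - t0, pi - t1, t2))"

definition klein_rel :: "real \<times> real \<times> real \<Rightarrow> real \<times> real \<times> real \<Rightarrow> bool" where
  "klein_rel x y \<longleftrightarrow> y \<in> {x, I_A x, I_B x, I_C x}"

definition tetG_mod_V :: "(real \<times> real \<times> real) set topology" where
  "tetG_mod_V = quotient_topology (subtopology euclidean tetG) klein_rel"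

end

theory Submission
  imports Defs
begin

type_synonym quat = "real \<times> (real^3)"

definition qmul :: "quat \<Rightarrow> quat \<Rightarrow> quat" where
  "qmul p q = (fst p * fst q - snd p \<bullet> snd q, fst p *\<^sub>R snd q + fst q *\<^sub>R snd p + cross3 (snd p) (snd q))"
definition qcnj :: "quat \<Rightarrow> quat" where "qcnj p = (fst p, - snd p)"
definition rotv :: "quat \<Rightarrow> real^3 \<Rightarrow> real^3" where
  "rotv p x = (fst p * fst p - snd p \<bullet> snd p) *\<^sub>R x + (2 * (snd p \<bullet> x)) *\<^sub>R snd p + (2 * fst p) *\<^sub>R (cross3 (snd p) x)"
definition qn :: "quat \<Rightarrow> real" where "qn p = fst p * fst p + snd p \<bullet> snd p"
definition Rm :: "quat \<Rightarrow> mat3" where "Rm p = matrix (rotv p)"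

lemmas coord = cross3_def inner_vec_def sum_3 vec_eq_iff forall_3 vector_3

lemma rotv_mul: "rotv (qmul p q) x = rotv p (rotv q x)"
  by (simp add: rotv_def qmul_def coord algebra_simps) algebra?

lemma linear_rotv: "linear (rotv p)"
  by (rule linearI) (simp_all add: rotv_def coord algebra_simps)

lemma Rm_apply: "Rm p *v x = rotv p x"
  unfolding Rm_def by (rule matrix_works) (simp add: linear_matrix_vector_mul_eq linear_rotv)

lemma Rm_mul: "Rm (qmul p q) = Rm p ** Rm q"
  by (simp add: matrix_eq Rm_apply matrix_vector_mul_assoc[symmetric] rotv_mul)

lemma rotv_scalar: "rotv (c, 0) x = (c*c) *\<^sub>R x"
  by (simp add: rotv_def)

lemma Rm_one: "Rm (1, 0) = mat 1"
  by (simp add: matrix_eq Rm_apply rotv_scalar)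

lemma qmul_cnj: "qmul p (qcnj p) = (qn p, 0)" "qmul (qcnj p) p = (qn p, 0)"
  by (simp_all add: qmul_def qcnj_def qn_def coord algebra_simps)

lemma qmul_assoc: "qmul (qmul p q) r = qmul p (qmul q r)"
  by (simp add: qmul_def coord algebra_simps prod_eq_iff)

lemma qmul_one: "qmul (1,0) p = p" "qmul p (1,0) = p"
  by (simp_all add: qmul_def)

lemma qn_mul: "qn (qmul p q) = qn p * qn q"
  by (simp add: qmul_def qn_def coord algebra_simps) algebra?

lemma qcnj_mul: "qcnj (qmul p q) = qmul (qcnj q) (qcnj p)"
  by (simp add: qmul_def qcnj_def coord algebra_simps prod_eq_iff)

lemma conj_qmul: "qmul (qmul s (a, x)) (qcnj s) = (qn s * a, rotv s x)"
  by (simp add: qmul_def qcnj_def rotv_def qn_def coord algebra_simps prod_eq_iff) algebra?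

lemma transpose_Rm: "transpose (Rm p) = Rm (qcnj p)"
  by (simp add: Rm_def transpose_def matrix_def axis_def rotv_def qcnj_def coord algebra_simps)

lemma det_Rm: "det (Rm p) = qn p ^ 3"
  by (simp add: det_3 Rm_def matrix_def axis_def rotv_def qn_def coord algebra_simps power3_eq_cube) algebra?

lemma trace_Rm: "Rm p $1$1 + Rm p $2$2 + Rm p $3$3 = 3 * fst p * fst p - snd p \<bullet> snd p"
  by (simp add: Rm_def matrix_def axis_def rotv_def coord algebra_simps)

lemma sq3_zero: fixes x y z :: real assumes "x*x + y*y + z*z = 0" shows "x = 0" "y = 0" "z = 0"
proof -
  have "0 \<le> x*x" "0 \<le> y*y" "0 \<le> z*z" by simp_all
  then have "x*x = 0" "y*y = 0" "z*z = 0" using assms by linarith+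
  then show "x = 0" "y = 0" "z = 0" by simp_all
qed

lemma cof_row:
  fixes a b c d e f g h i :: real
  assumes r1: "a*a+b*b+c*c = 1" and r2: "d*d+e*e+f*f=1" and r3: "g*g+h*h+i*i=1"
  and o3: "d*g+e*h+f*i=0" and dt: "a*(e*i - f*h) - b*(d*i - f*g) + c*(d*h - e*g) = 1"
  shows "a = e*i - f*h" "b = f*g - d*i" "c = d*h - e*g"
proof -
  have "(a - (e*i - f*h))*(a - (e*i - f*h)) + (b - (f*g - d*i))*(b - (f*g - d*i)) + (c - (d*h - e*g))*(c - (d*h - e*g)) = 0"
    using assms by algebra
  from sq3_zero[OF this] show "a = e*i - f*h" "b = f*g - d*i" "c = d*h - e*g" by simp_all
qed

lemma cof_all:
  fixes a b c d e f g h i :: real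
  assumes r1: "a*a+b*b+c*c = 1" and r2: "d*d+e*e+f*f=1" and r3: "g*g+h*h+i*i=1"
  and o1: "a*d+b*e+c*f = 0" and o2: "a*g+b*h+c*i=0" and o3: "d*g+e*h+f*i=0"
  and dt: "a*(e*i - f*h) - b*(d*i - f*g) + c*(d*h - e*g) = 1"
  shows "a = e*i - f*h" "b = f*g - d*i" "c = d*h - e*g"
    "d = h*c - i*b" "e = i*a - g*c" "f = g*b - h*a"
    "g = b*f - c*e" "h = c*d - a*f" "i = a*e - b*d"
proof -
  have A: "a = e*i - f*h" "b = f*g - d*i" "c = d*h - e*g" using cof_row[OF r1 r2 r3 o3 dt] by auto
  have dt2: "d*(h*c - i*b) - e*(g*c - i*a) + f*(g*b - h*a) = 1" using dt by algebra
  have o2': "g*a+h*b+i*c=0" using o2 by algebra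
  have B: "d = h*c - i*b" "e = i*a - g*c" "f = g*b - h*a" using cof_row[OF r2 r3 r1 o2' dt2] by auto
  have dt3: "g*(b*f - c*e) - h*(a*f - c*d) + i*(a*e - b*d) = 1" using dt by algebra
  have C: "g = b*f - c*e" "h = c*d - a*f" "i = a*e - b*d" using cof_row[OF r3 r1 r2 o1 dt3] by auto
  show "a = e*i - f*h" "b = f*g - d*i" "c = d*h - e*g" by (fact A)+
  show "d = h*c - i*b" "e = i*a - g*c" "f = g*b - h*a" by (fact B)+
  show "g = b*f - c*e" "h = c*d - a*f" "i = a*e - b*d" by (fact C)+
qed

lemma lc0:
  fixes a b c d e f g h i :: real
  assumes c1: "a = e*i - f*h" and c2: "b = f*g - d*i" and c3: "c = d*h - e*g"
  and c4: "d = h*c - i*b" and c5: "e = i*a - g*c" and c6: "f = g*b - h*a"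
  and c7: "g = b*f - c*e" and c8: "h = c*d - a*f" and c9: "i = a*e - b*d"
  and r1: "a*a+b*b+c*c = 1" and r2: "d*d+e*e+f*f=1" and r3: "g*g+h*h+i*i=1"
  and o1: "a*d+b*e+c*f = 0" and o2: "a*g+b*h+c*i=0" and o3: "d*g+e*h+f*i=0"
  shows "(1+a+e+i)*(1+a+e+i) + ((h-f)*(h-f)+(c-g)*(c-g)+(d-b)*(d-b)) = 4*(1+a+e+i)"
  using assms by algebra

lemma lc1:
  fixes a b c d e f g h i :: real
  assumes c1: "a = e*i - f*h" and c2: "b = f*g - d*i" and c3: "c = d*h - e*g"
  and c4: "d = h*c - i*b" and c5: "e = i*a - g*c" and c6: "f = g*b - h*a"
  and c7: "g = b*f - c*e" and c8: "h = c*d - a*f" and c9: "i = a*e - b*d"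
  and r1: "a*a+b*b+c*c = 1" and r2: "d*d+e*e+f*f=1" and r3: "g*g+h*h+i*i=1"
  and o1: "a*d+b*e+c*f = 0" and o2: "a*g+b*h+c*i=0" and o3: "d*g+e*h+f*i=0"
  shows "(1+a+e+i)*(1+a+e+i) - ((h-f)*(h-f)+(c-g)*(c-g)+(d-b)*(d-b)) + 2*(h-f)*(h-f) = 4*(1+a+e+i)*a"
  using assms by algebra

lemma lc2:
  fixes a b c d e f g h i :: real
  assumes c1: "a = e*i - f*h" and c2: "b = f*g - d*i" and c3: "c = d*h - e*g"
  and c4: "d = h*c - i*b" and c5: "e = i*a - g*c" and c6: "f = g*b - h*a"
  and c7: "g = b*f - c*e" and c8: "h = c*d - a*f" and c9: "i = a*e - b*d"
  and r1: "a*a+b*b+c*c = 1" and r2: "d*d+e*e+f*f=1" and r3: "g*g+h*h+i*i=1"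
  and o1: "a*d+b*e+c*f = 0" and o2: "a*g+b*h+c*i=0" and o3: "d*g+e*h+f*i=0"
  shows "(1+a+e+i)*(1+a+e+i) - ((h-f)*(h-f)+(c-g)*(c-g)+(d-b)*(d-b)) + 2*(c-g)*(c-g) = 4*(1+a+e+i)*e"
  using assms by algebra

lemma lc3:
  fixes a b c d e f g h i :: real
  assumes c1: "a = e*i - f*h" and c2: "b = f*g - d*i" and c3: "c = d*h - e*g"
  and c4: "d = h*c - i*b" and c5: "e = i*a - g*c" and c6: "f = g*b - h*a"
  and c7: "g = b*f - c*e" and c8: "h = c*d - a*f" and c9: "i = a*e - b*d"
  and r1: "a*a+b*b+c*c = 1" and r2: "d*d+e*e+f*f=1" and r3: "g*g+h*h+i*i=1"
  and o1: "a*d+b*e+c*f = 0" and o2: "a*g+b*h+c*i=0" and o3: "d*g+e*h+f*i=0"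
  shows "(1+a+e+i)*(1+a+e+i) - ((h-f)*(h-f)+(c-g)*(c-g)+(d-b)*(d-b)) + 2*(d-b)*(d-b) = 4*(1+a+e+i)*i"
  using assms by algebra

lemma lc4:
  fixes a b c d e f g h i :: real
  assumes c1: "a = e*i - f*h" and c2: "b = f*g - d*i" and c3: "c = d*h - e*g"
  and c4: "d = h*c - i*b" and c5: "e = i*a - g*c" and c6: "f = g*b - h*a"
  and c7: "g = b*f - c*e" and c8: "h = c*d - a*f" and c9: "i = a*e - b*d"
  and r1: "a*a+b*b+c*c = 1" and r2: "d*d+e*e+f*f=1" and r3: "g*g+h*h+i*i=1"
  and o1: "a*d+b*e+c*f = 0" and o2: "a*g+b*h+c*i=0" and o3: "d*g+e*h+f*i=0"
  shows "2*(h-f)*(c-g) - 2*(1+a+e+i)*(d-b) = 4*(1+a+e+i)*b"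
  using assms by algebra

lemma lc5:
  fixes a b c d e f g h i :: real
  assumes c1: "a = e*i - f*h" and c2: "b = f*g - d*i" and c3: "c = d*h - e*g"
  and c4: "d = h*c - i*b" and c5: "e = i*a - g*c" and c6: "f = g*b - h*a"
  and c7: "g = b*f - c*e" and c8: "h = c*d - a*f" and c9: "i = a*e - b*d"
  and r1: "a*a+b*b+c*c = 1" and r2: "d*d+e*e+f*f=1" and r3: "g*g+h*h+i*i=1"
  and o1: "a*d+b*e+c*f = 0" and o2: "a*g+b*h+c*i=0" and o3: "d*g+e*h+f*i=0"
  shows "2*(h-f)*(c-g) + 2*(1+a+e+i)*(d-b) = 4*(1+a+e+i)*d"
  using assms by algebra

lemma lc6:
  fixes a b c d e f g h i :: real
  assumes c1: "a = e*i - f*h" and c2: "b = f*g - d*i" and c3: "c = d*h - e*g"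
  and c4: "d = h*c - i*b" and c5: "e = i*a - g*c" and c6: "f = g*b - h*a"
  and c7: "g = b*f - c*e" and c8: "h = c*d - a*f" and c9: "i = a*e - b*d"
  and r1: "a*a+b*b+c*c = 1" and r2: "d*d+e*e+f*f=1" and r3: "g*g+h*h+i*i=1"
  and o1: "a*d+b*e+c*f = 0" and o2: "a*g+b*h+c*i=0" and o3: "d*g+e*h+f*i=0"
  shows "2*(h-f)*(d-b) + 2*(1+a+e+i)*(c-g) = 4*(1+a+e+i)*c"
  using assms by algebra

lemma lc7:
  fixes a b c d e f g h i :: real
  assumes c1: "a = e*i - f*h" and c2: "b = f*g - d*i" and c3: "c = d*h - e*g"
  and c4: "d = h*c - i*b" and c5: "e = i*a - g*c" and c6: "f = g*b - h*a"
  and c7: "g = b*f - c*e" and c8: "h = c*d - a*f" and c9: "i = a*e - b*d"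
  and r1: "a*a+b*b+c*c = 1" and r2: "d*d+e*e+f*f=1" and r3: "g*g+h*h+i*i=1"
  and o1: "a*d+b*e+c*f = 0" and o2: "a*g+b*h+c*i=0" and o3: "d*g+e*h+f*i=0"
  shows "2*(h-f)*(d-b) - 2*(1+a+e+i)*(c-g) = 4*(1+a+e+i)*g"
  using assms by algebra

lemma lc8:
  fixes a b c d e f g h i :: real
  assumes c1: "a = e*i - f*h" and c2: "b = f*g - d*i" and c3: "c = d*h - e*g"
  and c4: "d = h*c - i*b" and c5: "e = i*a - g*c" and c6: "f = g*b - h*a"
  and c7: "g = b*f - c*e" and c8: "h = c*d - a*f" and c9: "i = a*e - b*d"
  and r1: "a*a+b*b+c*c = 1" and r2: "d*d+e*e+f*f=1" and r3: "g*g+h*h+i*i=1"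
  and o1: "a*d+b*e+c*f = 0" and o2: "a*g+b*h+c*i=0" and o3: "d*g+e*h+f*i=0"
  shows "2*(c-g)*(d-b) - 2*(1+a+e+i)*(h-f) = 4*(1+a+e+i)*f"
  using assms by algebra

lemma lc9:
  fixes a b c d e f g h i :: real
  assumes c1: "a = e*i - f*h" and c2: "b = f*g - d*i" and c3: "c = d*h - e*g"
  and c4: "d = h*c - i*b" and c5: "e = i*a - g*c" and c6: "f = g*b - h*a"
  and c7: "g = b*f - c*e" and c8: "h = c*d - a*f" and c9: "i = a*e - b*d"
  and r1: "a*a+b*b+c*c = 1" and r2: "d*d+e*e+f*f=1" and r3: "g*g+h*h+i*i=1"
  and o1: "a*d+b*e+c*f = 0" and o2: "a*g+b*h+c*i=0" and o3: "d*g+e*h+f*i=0"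
  shows "2*(c-g)*(d-b) + 2*(1+a+e+i)*(h-f) = 4*(1+a+e+i)*h"
  using assms by algebra


lemma Rm_ent:
  "Rm (a,u) $1$1 = a*a - u\<bullet>u + 2*(u$1*u$1)" "Rm (a,u) $1$2 = 2*(u$1*u$2) - 2*a*u$3" "Rm (a,u) $1$3 = 2*(u$1*u$3) + 2*a*u$2"
  "Rm (a,u) $2$1 = 2*(u$1*u$2) + 2*a*u$3" "Rm (a,u) $2$2 = a*a - u\<bullet>u + 2*(u$2*u$2)" "Rm (a,u) $2$3 = 2*(u$2*u$3) - 2*a*u$1"
  "Rm (a,u) $3$1 = 2*(u$1*u$3) - 2*a*u$2" "Rm (a,u) $3$2 = 2*(u$2*u$3) + 2*a*u$1" "Rm (a,u) $3$3 = a*a - u\<bullet>u + 2*(u$3*u$3)"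
  by (simp_all add: Rm_def matrix_def axis_def rotv_def cross3_def vector_3 inner_vec_def sum_3 algebra_simps)

lemma SO3_polys:
  assumes "M \<in> SO3"
  shows "M$1$1*M$1$1+M$1$2*M$1$2+M$1$3*M$1$3 = 1" "M$2$1*M$2$1+M$2$2*M$2$2+M$2$3*M$2$3 = 1"
    "M$3$1*M$3$1+M$3$2*M$3$2+M$3$3*M$3$3 = 1"
    "M$1$1*M$2$1+M$1$2*M$2$2+M$1$3*M$2$3 = 0" "M$1$1*M$3$1+M$1$2*M$3$2+M$1$3*M$3$3 = 0"
    "M$2$1*M$3$1+M$2$2*M$3$2+M$2$3*M$3$3 = 0"
    "M$1$1*(M$2$2*M$3$3 - M$2$3*M$3$2) - M$1$2*(M$2$1*M$3$3 - M$2$3*M$3$1) + M$1$3*(M$2$1*M$3$2 - M$2$2*M$3$1) = 1"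
proof -
  have o: "M ** transpose M = mat 1" and d: "det M = 1" using assms unfolding SO3_def orthogonal_matrix_def by auto
  have e: "(M ** transpose M) $i$j = (mat 1 :: mat3) $i$j" for i j using o by simp
  show "M$1$1*M$1$1+M$1$2*M$1$2+M$1$3*M$1$3 = 1" using e[of 1 1] by (simp add: matrix_matrix_mult_def transpose_def mat_def sum_3)
  show "M$2$1*M$2$1+M$2$2*M$2$2+M$2$3*M$2$3 = 1" using e[of 2 2] by (simp add: matrix_matrix_mult_def transpose_def mat_def sum_3)
  show "M$3$1*M$3$1+M$3$2*M$3$2+M$3$3*M$3$3 = 1" using e[of 3 3] by (simp add: matrix_matrix_mult_def transpose_def mat_def sum_3)
  show "M$1$1*M$2$1+M$1$2*M$2$2+M$1$3*M$2$3 = 0" using e[of 1 2] by (simp add: matrix_matrix_mult_def transpose_def mat_def sum_3)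
  show "M$1$1*M$3$1+M$1$2*M$3$2+M$1$3*M$3$3 = 0" using e[of 1 3] by (simp add: matrix_matrix_mult_def transpose_def mat_def sum_3)
  show "M$2$1*M$3$1+M$2$2*M$3$2+M$2$3*M$3$3 = 0" using e[of 2 3] by (simp add: matrix_matrix_mult_def transpose_def mat_def sum_3)
  show "M$1$1*(M$2$2*M$3$3 - M$2$3*M$3$2) - M$1$2*(M$2$1*M$3$3 - M$2$3*M$3$1) + M$1$3*(M$2$1*M$3$2 - M$2$2*M$3$1) = 1"
    using d by (simp add: det_3 algebra_simps)
qed

lemma Rm_scale: "Rm (c *\<^sub>R p) = (c*c) *\<^sub>R Rm p"
  by (cases p) (simp add: Rm_ent vec_eq_iff forall_3 algebra_simps inner_commute)

lemma qn_scale: "qn (c *\<^sub>R p) = (c*c) * qn p"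
  by (simp add: qn_def algebra_simps)

lemma lift_pos:
  assumes M: "M \<in> SO3" and tp: "1 + M$1$1 + M$2$2 + M$3$3 > 0"
  shows "\<exists>p. qn p = 1 \<and> Rm p = M"
proof -
  define t where "t = 1 + M$1$1 + M$2$2 + M$3$3"
  define k1 where "k1 = M$3$2 - M$2$3"
  define k2 where "k2 = M$1$3 - M$3$1"
  define k3 where "k3 = M$2$1 - M$1$2"
  define p' where "p' = (t, vector [k1, k2, k3] :: real^3)"
  note P = SO3_polys[OF M]
  note C = cof_all[OF P]
  note L = lc0[OF C P(1-6)] lc1[OF C P(1-6)] lc2[OF C P(1-6)]
    lc3[OF C P(1-6)] lc4[OF C P(1-6)] lc5[OF C P(1-6)]
    lc6[OF C P(1-6)] lc7[OF C P(1-6)] lc8[OF C P(1-6)]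
    lc9[OF C P(1-6)]
  note L2 = L[folded t_def k1_def k2_def k3_def]
  have E: "Rm p' $1$1 = 4*t*M$1$1" "Rm p' $2$2 = 4*t*M$2$2" "Rm p' $3$3 = 4*t*M$3$3"
    "Rm p' $1$2 = 4*t*M$1$2" "Rm p' $2$1 = 4*t*M$2$1" "Rm p' $1$3 = 4*t*M$1$3"
    "Rm p' $3$1 = 4*t*M$3$1" "Rm p' $2$3 = 4*t*M$2$3" "Rm p' $3$2 = 4*t*M$3$2"
    using L2 by (simp_all add: p'_def Rm_ent inner_vec_def sum_3 algebra_simps)
  have R: "Rm p' = (4*t) *\<^sub>R M"
    using E by (simp add: vec_eq_iff forall_3)
  have Q: "qn p' = 4*t"
    using L2(1) by (simp add: p'_def qn_def inner_vec_def sum_3 algebra_simps)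
  have t0: "t > 0" using tp t_def by simp
  define c where "c = 1 / (2 * sqrt t)"
  have cc: "c * c * (4*t) = 1" using t0 unfolding c_def by (simp add: field_simps)
  show ?thesis
  proof (intro exI conjI)
    show "qn (c *\<^sub>R p') = 1" using cc Q by (simp add: qn_scale)
    show "Rm (c *\<^sub>R p') = M" using cc R by (simp add: Rm_scale)
  qed
qed


lemma Rm_orth: assumes "qn e = 1" shows "Rm (qcnj e) ** Rm e = mat 1" "Rm e ** Rm (qcnj e) = mat 1"
  using assms by (simp_all add: Rm_mul[symmetric] qmul_cnj Rm_one)

lemma qn_cnj: "qn (qcnj p) = qn p" by (simp add: qn_def qcnj_def)

lemma Rm_SO3: assumes "qn p = 1" shows "Rm p \<in> SO3"
  using Rm_orth[OF assms] assms unfolding SO3_def orthogonal_matrix_def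
  by (simp add: transpose_Rm det_Rm)

lemma SO3_mul: "A \<in> SO3 \<Longrightarrow> B \<in> SO3 \<Longrightarrow> A ** B \<in> SO3"
  unfolding SO3_def by (simp add: orthogonal_matrix_mul det_mul)

lemma SO3_inv: assumes "g \<in> SO3" shows "matrix_inv g = transpose g"
proof -
  have o: "g ** transpose g = mat 1" "transpose g ** g = mat 1" using assms
    unfolding SO3_def orthogonal_matrix_def by auto
  have "g ** matrix_inv g = mat 1 \<and> matrix_inv g ** g = mat 1"
    unfolding matrix_inv_def by (rule someI[of _ "transpose g"]) (simp add: o)
  then have h: "g ** matrix_inv g = mat 1" by simp
  have "matrix_inv g = (transpose g ** g) ** matrix_inv g" by (simp add: o)
  also have "\<dots> = transpose g ** (g ** matrix_inv g)" by (simp add: matrix_mul_assoc)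
  also have "\<dots> = transpose g" by (simp add: h)
  finally show ?thesis .
qed

lemma lift_via:
  assumes e: "qn e = 1" and M: "M \<in> SO3" and l: "\<exists>p. qn p = 1 \<and> Rm p = Rm e ** M"
  shows "\<exists>p. qn p = 1 \<and> Rm p = M"
proof -
  obtain p where p: "qn p = 1" "Rm p = Rm e ** M" using l by blast
  have "Rm (qmul (qcnj e) p) = M"
    by (simp add: Rm_mul p matrix_mul_assoc Rm_orth[OF e])
  moreover have "qn (qmul (qcnj e) p) = 1" by (simp add: qn_mul qn_cnj e p)
  ultimately show ?thesis by blast
qed

lemma lift_all: assumes M: "M \<in> SO3" shows "\<exists>p. qn p = 1 \<and> Rm p = M"
proof -
  define e1 where "e1 = (0::real, axis 1 1 :: real^3)"
  define e2 where "e2 = (0::real, axis 2 1 :: real^3)"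
  define e3 where "e3 = (0::real, axis 3 1 :: real^3)"
  have n: "qn e1 = 1" "qn e2 = 1" "qn e3 = 1"
    by (simp_all add: e1_def e2_def e3_def qn_def)
  have tr1: "1 + (Rm e1 ** M)$1$1 + (Rm e1 ** M)$2$2 + (Rm e1 ** M)$3$3 = 1 + M$1$1 - M$2$2 - M$3$3"
    by (simp add: e1_def Rm_ent matrix_matrix_mult_def sum_3 axis_def inner_vec_def)
  have tr2: "1 + (Rm e2 ** M)$1$1 + (Rm e2 ** M)$2$2 + (Rm e2 ** M)$3$3 = 1 - M$1$1 + M$2$2 - M$3$3"
    by (simp add: e2_def Rm_ent matrix_matrix_mult_def sum_3 axis_def inner_vec_def)
  have tr3: "1 + (Rm e3 ** M)$1$1 + (Rm e3 ** M)$2$2 + (Rm e3 ** M)$3$3 = 1 - M$1$1 - M$2$2 + M$3$3"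
    by (simp add: e3_def Rm_ent matrix_matrix_mult_def sum_3 axis_def inner_vec_def)
  consider "1 + M$1$1 + M$2$2 + M$3$3 > 0" | "1 + M$1$1 - M$2$2 - M$3$3 > 0"
    | "1 - M$1$1 + M$2$2 - M$3$3 > 0" | "1 - M$1$1 - M$2$2 + M$3$3 > 0" by linarith
  then show ?thesis
  proof cases
    case 1 then show ?thesis by (rule lift_pos[OF M])
  next
    case 2 then show ?thesis using lift_via[OF n(1) M] lift_pos[OF SO3_mul[OF Rm_SO3[OF n(1)] M]] tr1 by simp
  next
    case 3 then show ?thesis using lift_via[OF n(2) M] lift_pos[OF SO3_mul[OF Rm_SO3[OF n(2)] M]] tr2 by simp
  next
    case 4 then show ?thesis using lift_via[OF n(3) M] lift_pos[OF SO3_mul[OF Rm_SO3[OF n(3)] M]] tr3 by simp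
  qed
qed

lemma Rm_kernel:
  assumes r: "qn r = 1" and R: "Rm r = mat 1" shows "r = (1,0) \<or> r = (-1,0)"
proof -
  have "Rm r $1$1 + Rm r $2$2 + Rm r $3$3 = 3" using R by (simp add: mat_def)
  then have a: "3 * fst r * fst r - snd r \<bullet> snd r = 3" by (simp add: trace_Rm)
  have b: "fst r * fst r + snd r \<bullet> snd r = 1" using r by (simp add: qn_def)
  have "snd r \<bullet> snd r = 0" using a b by linarith
  then have u: "snd r = 0" by simp
  have "fst r * fst r = 1" using a b by linarith
  then have "fst r = 1 \<or> fst r = -1"
    by (metis abs_of_nonneg abs_of_nonpos le_less_linear mult_cancel_left1 mult_minus_left square_eq_1_iff)
  then show ?thesis using u by (cases r) auto
qed

lemma Rm_inj:
  assumes p: "qn p = 1" and q: "qn q = 1" and e: "Rm p = Rm q" shows "q = p \<or> q = - p"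
proof -
  define r where "r = qmul (qcnj p) q"
  have "Rm r = mat 1" unfolding r_def Rm_mul e[symmetric] using Rm_orth[OF p] by simp
  moreover have "qn r = 1" unfolding r_def by (simp add: qn_mul qn_cnj p q)
  ultimately have "r = (1,0) \<or> r = (-1,0)" by (rule Rm_kernel[rotated])
  moreover have "q = qmul p r" unfolding r_def
    by (simp add: qmul_assoc[symmetric] qmul_cnj p qmul_one)
  ultimately show ?thesis by (cases p) (auto simp: qmul_def)
qed


lemma perp2: fixes x y :: "real^3" obtains b where "b \<noteq> 0" "b \<bullet> x = 0" "b \<bullet> y = 0"
proof -
  have "dim {x, y} \<le> card {x, y}" by (rule dim_le_card) (auto intro: span_base)
  also have "\<dots> \<le> 2" by (simp add: card_insert_le_m1)
  finally have d: "dim {x, y} < DIM(real^3)" by simp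
  obtain b where b: "b \<noteq> 0" "\<And>z. z \<in> span {x, y} \<Longrightarrow> orthogonal b z"
    using orthogonal_to_subspace_exists[OF d] by blast
  have "b \<bullet> x = 0" using b(2)[of x] by (simp add: orthogonal_def span_base)
  moreover have "b \<bullet> y = 0" using b(2)[of y] by (simp add: orthogonal_def span_base)
  ultimately show ?thesis using that b(1) by blast
qed

definition ht :: "real^3 \<Rightarrow> quat" where "ht w = (0, (1 / norm w) *\<^sub>R w)"

lemma qn_ht: "w \<noteq> 0 \<Longrightarrow> qn (ht w) = 1"
  by (simp add: ht_def qn_def inner_commute power2_norm_eq_inner[symmetric] field_simps)

lemma ht_apply: assumes "w \<noteq> 0" shows "rotv (ht w) x = (2 * (w \<bullet> x) / (w \<bullet> w)) *\<^sub>R w - x"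
proof -
  have n: "norm w * norm w = w \<bullet> w" by (simp add: power2_norm_eq_inner[symmetric] power2_eq_square)
  have "w \<bullet> w \<noteq> 0" using assms by simp
  then show ?thesis using assms n
    by (simp add: ht_def rotv_def field_simps inner_commute)
qed

lemma rotv_inner: "qn s = 1 \<Longrightarrow> rotv s x \<bullet> rotv s y = x \<bullet> y"
proof -
  have "rotv s x \<bullet> rotv s y = (qn s * qn s) * (x \<bullet> y)"
    by (simp add: rotv_def qn_def coord algebra_simps) algebra?
  then show "qn s = 1 \<Longrightarrow> ?thesis" by simp
qed

lemma rotv_minus: "rotv s (- x) = - rotv s x"
  by (simp add: rotv_def coord algebra_simps)

lemma step1: assumes "u \<bullet> u = u' \<bullet> u'" shows "\<exists>s. qn s = 1 \<and> rotv s u = u'"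
proof (cases "u + u' = 0")
  case False
  let ?w = "u + u'"
  have "?w \<bullet> ?w = 2 * (?w \<bullet> u)" using assms by (simp add: algebra_simps inner_commute)
  moreover have "?w \<bullet> ?w \<noteq> 0" using False by simp
  ultimately have "rotv (ht ?w) u = u'" using False by (simp add: ht_apply field_simps)
  then show ?thesis using qn_ht[OF False] by blast
next
  case True
  obtain b where b: "b \<noteq> 0" "b \<bullet> u = 0" "b \<bullet> u = 0" by (rule perp2)
  have "rotv (ht b) u = u'" using b True by (simp add: ht_apply add_eq_0_iff)
  then show ?thesis using qn_ht[OF b(1)] by blast
qed

lemma step2:
  assumes i: "u' \<bullet> v1 = u' \<bullet> v'" and n: "v1 \<bullet> v1 = v' \<bullet> v'"
  shows "\<exists>s. qn s = 1 \<and> rotv s u' = u' \<and> rotv s v1 = v'"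
proof -
  obtain a where a: "a \<noteq> 0" "a \<bullet> u' = 0" "a \<bullet> u' = 0" by (rule perp2)
  define v2 where "v2 = rotv (ht a) v1"
  have Ha: "rotv (ht a) u' = - u'" using a by (simp add: ht_apply)
  have "v2 \<bullet> (- u') = v1 \<bullet> u'" unfolding v2_def Ha[symmetric] by (rule rotv_inner[OF qn_ht[OF a(1)]])
  then have v2u: "v2 \<bullet> u' = - (u' \<bullet> v')" using i by (simp add: inner_commute)
  have v2n: "v2 \<bullet> v2 = v' \<bullet> v'" unfolding v2_def using rotv_inner[OF qn_ht[OF a(1)]] n by simp
  obtain b where b: "b \<noteq> 0" "b \<bullet> u' = 0" "rotv (ht b) v2 = v'"
  proof (cases "v2 + v' = 0")
    case False
    let ?w = "v2 + v'"
    have "?w \<bullet> ?w = 2 * (?w \<bullet> v2)" using v2n by (simp add: algebra_simps inner_commute)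
    moreover have "?w \<bullet> ?w \<noteq> 0" using False by simp
    ultimately have "rotv (ht ?w) v2 = v'" using False by (simp add: ht_apply field_simps)
    moreover have "?w \<bullet> u' = 0" using v2u by (simp add: inner_commute algebra_simps)
    ultimately show ?thesis using that False by blast
  next
    case True
    obtain b where b: "b \<noteq> 0" "b \<bullet> u' = 0" "b \<bullet> v2 = 0" by (rule perp2)
    have "rotv (ht b) v2 = v'" using b True by (simp add: ht_apply add_eq_0_iff)
    then show ?thesis using that b by blast
  qed
  have Hb: "rotv (ht b) (- u') = u'" using b by (simp add: ht_apply)
  show ?thesis
  proof (intro exI conjI)
    show "qn (qmul (ht b) (ht a)) = 1" by (simp add: qn_mul qn_ht a b)
    show "rotv (qmul (ht b) (ht a)) u' = u'" by (simp add: rotv_mul Ha Hb)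
    show "rotv (qmul (ht b) (ht a)) v1 = v'" by (simp add: rotv_mul b(3) v2_def[symmetric])
  qed
qed

lemma rot2:
  assumes "u \<bullet> u = u' \<bullet> u'" "v \<bullet> v = v' \<bullet> v'" "u \<bullet> v = u' \<bullet> v'"
  shows "\<exists>s. qn s = 1 \<and> rotv s u = u' \<and> rotv s v = v'"
proof -
  obtain s1 where s1: "qn s1 = 1" "rotv s1 u = u'" using step1[OF assms(1)] by blast
  have "u' \<bullet> rotv s1 v = u' \<bullet> v'" using rotv_inner[OF s1(1), of u v] s1(2) assms(3) by simp
  moreover have "rotv s1 v \<bullet> rotv s1 v = v' \<bullet> v'" using rotv_inner[OF s1(1)] assms(2) by simp
  ultimately obtain s2 where s2: "qn s2 = 1" "rotv s2 u' = u'" "rotv s2 (rotv s1 v) = v'"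
    using step2 by blast
  show ?thesis
  proof (intro exI conjI)
    show "qn (qmul s2 s1) = 1" by (simp add: qn_mul s1 s2)
    show "rotv (qmul s2 s1) u = u'" by (simp add: rotv_mul s1 s2)
    show "rotv (qmul s2 s1) v = v'" by (simp add: rotv_mul s2)
  qed
qed

lemma conj_classify:
  assumes p: "qn p = 1" and q: "qn q = 1" and p': "qn p' = 1" and q': "qn q' = 1"
    and e1: "fst p = fst p'" and e2: "fst q = fst q'" and e3: "fst (qmul p q) = fst (qmul p' q')"
  shows "\<exists>s. qn s = 1 \<and> p' = qmul (qmul s p) (qcnj s) \<and> q' = qmul (qmul s q) (qcnj s)"
proof -
  have a: "snd p \<bullet> snd p = snd p' \<bullet> snd p'" using p p' e1 by (simp add: qn_def)
  have b: "snd q \<bullet> snd q = snd q' \<bullet> snd q'" using q q' e2 by (simp add: qn_def)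
  have c: "snd p \<bullet> snd q = snd p' \<bullet> snd q'" using e1 e2 e3 by (simp add: qmul_def)
  obtain s where s: "qn s = 1" "rotv s (snd p) = snd p'" "rotv s (snd q) = snd q'"
    using rot2[OF a b c] by blast
  have "qmul (qmul s p) (qcnj s) = (fst p', snd p')"
    using conj_qmul[of s "fst p" "snd p", unfolded prod.collapse] s e1 by simp
  moreover have "qmul (qmul s q) (qcnj s) = (fst q', snd q')"
    using conj_qmul[of s "fst q" "snd q", unfolded prod.collapse] s e2 by simp
  ultimately show ?thesis using s(1) by (metis prod.collapse)
qed

definition tetH :: "(real \<times> real \<times> real) set" where
  "tetH = {(a,b,c). a + b + c \<ge> pi \<and> a \<ge> b + c - pi \<and> b \<ge> a + c - pi \<and> c \<ge> a + b - pi}"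

lemma tetH_halfspaces: "tetH = {x. inner (-1::real,-1::real,-1::real) x \<le> - pi} \<inter>
   {x. inner (-1::real,1::real,1::real) x \<le> pi} \<inter> {x. inner (1::real,-1::real,1::real) x \<le> pi}
   \<inter> {x. inner (1::real,1::real,-1::real) x \<le> pi}"
  unfolding tetH_def by auto

lemma convex_tetH: "convex tetH"
  unfolding tetH_halfspaces by (intro convex_Int convex_halfspace_le)

lemma tetG_sub: "tetG \<subseteq> tetH"
  unfolding tetG_def
proof (rule hull_minimal)
  show "convex tetH" by (rule convex_tetH)
qed (auto simp: tetH_def)

lemma tetH_sub: "tetH \<subseteq> tetG"
proof
  fix x assume x: "x \<in> tetH"
  obtain a b c where abc: "x = (a,b,c)" by (cases x) auto
  have h: "a + b + c \<ge> pi" "a \<ge> b + c - pi" "b \<ge> a + c - pi" "c \<ge> a + b - pi"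
    using x abc by (auto simp: tetH_def)
  define V1 where "V1 = (pi, 0::real, 0::real)"
  define V2 where "V2 = (0::real, pi, 0::real)"
  define V3 where "V3 = (0::real, 0::real, pi)"
  define V4 where "V4 = (pi, pi, pi)"
  define l1 where "l1 = (a - b - c + pi) / (2*pi)"
  define l2 where "l2 = (b - a - c + pi) / (2*pi)"
  define l3 where "l3 = (c - a - b + pi) / (2*pi)"
  define l4 where "l4 = (a + b + c - pi) / (2*pi)"
  define u where "u y = (if y = V1 then l1 else if y = V2 then l2 else if y = V3 then l3 else l4)" for y
  have d: "V1 \<noteq> V2" "V1 \<noteq> V3" "V1 \<noteq> V4" "V2 \<noteq> V3" "V2 \<noteq> V4" "V3 \<noteq> V4"
    by (simp_all add: V1_def V2_def V3_def V4_def)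
  have nn: "0 \<le> l1" "0 \<le> l2" "0 \<le> l3" "0 \<le> l4"
    using h by (simp_all add: l1_def l2_def l3_def l4_def)
  have s1: "l1 + l2 + l3 + l4 = 1" by (simp add: l1_def l2_def l3_def l4_def field_simps)
  have s2: "l1 *\<^sub>R V1 + l2 *\<^sub>R V2 + l3 *\<^sub>R V3 + l4 *\<^sub>R V4 = x"
    by (simp add: abc V1_def V2_def V3_def V4_def l1_def l2_def l3_def l4_def field_simps)
  have "x \<in> convex hull {V1, V2, V3, V4}"
    unfolding convex_hull_finite[OF finite.insertI[OF finite.insertI[OF finite.insertI[OF finite.insertI[OF finite.emptyI]]]]]
  proof (intro CollectI exI[of _ u] conjI)
    show "\<forall>y\<in>{V1, V2, V3, V4}. 0 \<le> u y" using nn by (auto simp: u_def)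
    show "sum u {V1, V2, V3, V4} = 1" using d s1 by (simp add: u_def)
    show "(\<Sum>y\<in>{V1, V2, V3, V4}. u y *\<^sub>R y) = x" using d s2 by (simp add: u_def algebra_simps)
  qed
  then show "x \<in> tetG" unfolding tetG_def V1_def V2_def V3_def V4_def .
qed

lemma tetG_eq: "tetG = tetH" using tetG_sub tetH_sub by blast


definition phi :: "quat \<Rightarrow> quat \<Rightarrow> real \<times> real \<times> real" where
  "phi p q = (pi - arccos (fst p), arccos (fst q), arccos (fst (qmul p q)))"

lemma fst_bound: assumes "qn p = 1" shows "-1 \<le> fst p" "fst p \<le> 1"
proof -
  have "fst p * fst p \<le> 1" using assms inner_ge_zero[of "snd p"] unfolding qn_def by linarith
  then have "\<bar>fst p\<bar> \<le> 1" by (simp add: abs_square_le_1[symmetric] power2_eq_square)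
  then show "-1 \<le> fst p" "fst p \<le> 1" by auto
qed

lemma norm_snd: assumes "qn p = 1" shows "norm (snd p) = sin (arccos (fst p))"
proof -
  have "snd p \<bullet> snd p = 1 - (fst p)\<^sup>2" using assms by (simp add: qn_def power2_eq_square)
  then have "norm (snd p) = sqrt (1 - (fst p)\<^sup>2)" by (simp add: norm_eq_sqrt_inner)
  then show ?thesis using sin_arccos[OF fst_bound[OF assms]] by simp
qed

lemma arccos_ge: "0 \<le> x \<Longrightarrow> x \<le> pi \<Longrightarrow> -1 \<le> y \<Longrightarrow> y \<le> cos x \<Longrightarrow> x \<le> arccos y"
  using arccos_le_arccos[of y "cos x"] arccos_cos[of x] by simp

lemma arccos_le: "0 \<le> x \<Longrightarrow> x \<le> pi \<Longrightarrow> y \<le> 1 \<Longrightarrow> cos x \<le> y \<Longrightarrow> arccos y \<le> x"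
  using arccos_le_arccos[of "cos x" y] arccos_cos[of x] by simp

lemma tri_ineqs:
  assumes a: "0 \<le> al" "al \<le> pi" and b: "0 \<le> be" "be \<le> pi" and c: "-1 \<le> c" "c \<le> 1"
    and lo: "cos (al + be) \<le> c" and hi: "c \<le> cos (al - be)"
  shows "\<bar>al - be\<bar> \<le> arccos c" "arccos c \<le> al + be" "arccos c \<le> 2*pi - al - be"
proof -
  show "\<bar>al - be\<bar> \<le> arccos c" using hi a b c by (intro arccos_ge) auto
  have "arccos c \<le> al + be \<and> arccos c \<le> 2*pi - al - be"
  proof (cases "al + be \<le> pi")
    case True
    then have "arccos c \<le> al + be" using lo a b c by (intro arccos_le) auto
    moreover have "arccos c \<le> pi" using c by (rule arccos_ubound)
    ultimately show ?thesis using True by linarith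
  next
    case False
    have "cos (2*pi - (al + be)) = cos (al + be)" by simp
    then have "arccos c \<le> 2*pi - (al + be)" using lo a b c False by (intro arccos_le) auto
    then show ?thesis using False by linarith
  qed
  then show "arccos c \<le> al + be" "arccos c \<le> 2*pi - al - be" by auto
qed

lemma phi_in: assumes p: "qn p = 1" and q: "qn q = 1" shows "phi p q \<in> tetG"
proof -
  define al where "al = arccos (fst p)"
  define be where "be = arccos (fst q)"
  define c where "c = fst (qmul p q)"
  have pb: "-1 \<le> fst p" "fst p \<le> 1" using fst_bound[OF p] by auto
  have qb: "-1 \<le> fst q" "fst q \<le> 1" using fst_bound[OF q] by auto
  have cb: "-1 \<le> c" "c \<le> 1" using fst_bound[of "qmul p q"] qn_mul[of p q] p q unfolding c_def by auto
  have a: "0 \<le> al" "al \<le> pi" using arccos_bounded[OF pb] al_def by auto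
  have b: "0 \<le> be" "be \<le> pi" using arccos_bounded[OF qb] be_def by auto
  have ca: "cos al = fst p" "cos be = fst q" using pb qb al_def be_def by auto
  have sa: "sin al = norm (snd p)" "sin be = norm (snd q)" using norm_snd[OF p] norm_snd[OF q] al_def be_def by auto
  have cs: "\<bar>snd p \<bullet> snd q\<bar> \<le> norm (snd p) * norm (snd q)" by (rule Cauchy_Schwarz_ineq2)
  have ce: "c = fst p * fst q - snd p \<bullet> snd q" by (simp add: c_def qmul_def)
  have lo: "cos (al + be) \<le> c" using cs ce ca sa by (simp add: cos_add)
  have hi: "c \<le> cos (al - be)" using cs ce ca sa by (simp add: cos_diff)
  note T = tri_ineqs[OF a b cb lo hi]
  have "phi p q = (pi - al, be, arccos c)" by (simp add: phi_def al_def be_def c_def)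
  moreover have "(pi - al, be, arccos c) \<in> tetH" using T a b unfolding tetH_def by auto
  ultimately show ?thesis by (simp add: tetG_eq)
qed

lemma phi_surj: assumes "th \<in> tetG" shows "\<exists>p q. qn p = 1 \<and> qn q = 1 \<and> phi p q = th"
proof -
  obtain t0 t1 t2 where th: "th = (t0, t1, t2)" by (cases th) auto
  have h: "t0 + t1 + t2 \<ge> pi" "t0 \<ge> t1 + t2 - pi" "t1 \<ge> t0 + t2 - pi" "t2 \<ge> t0 + t1 - pi"
    using assms th by (auto simp: tetG_eq tetH_def)
  define al where "al = pi - t0"
  define be where "be = t1"
  define ga where "ga = t2"
  have a: "0 \<le> al" "al \<le> pi" and b: "0 \<le> be" "be \<le> pi" and g: "0 \<le> ga" "ga \<le> pi"
    using h by (auto simp: al_def be_def ga_def)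
  have g1: "\<bar>al - be\<bar> \<le> ga" using h by (auto simp: al_def be_def ga_def)
  have g2: "ga \<le> al + be" "ga \<le> 2*pi - al - be" using h by (auto simp: al_def be_def ga_def)
  define A where "A = cos al * cos be"
  define S where "S = sin al * sin be"
  have S0: "S \<ge> 0" using a b sin_ge_zero unfolding S_def by (simp add: mult_nonneg_nonneg)
  have hi: "cos ga \<le> A + S"
  proof -
    have "cos ga \<le> cos \<bar>al - be\<bar>" using g1 g a b by (intro cos_monotone_0_pi_le) auto
    then show ?thesis by (simp add: cos_diff A_def S_def)
  qed
  have lo: "A - S \<le> cos ga"
  proof (cases "al + be \<le> pi")
    case True
    have "cos (al + be) \<le> cos ga" using g2 g True by (intro cos_monotone_0_pi_le) auto
    then show ?thesis by (simp add: cos_add A_def S_def)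
  next
    case False
    have "cos (2*pi - al - be) \<le> cos ga" using g2 g False a b by (intro cos_monotone_0_pi_le) auto
    moreover have "cos (2*pi - al - be) = cos (al + be)"
      using cos_2pi_minus[of "al + be"] by (simp add: algebra_simps)
    ultimately show ?thesis by (simp add: cos_add A_def S_def)
  qed
  obtain t where t: "-1 \<le> t" "t \<le> 1" "A - S * t = cos ga"
  proof (cases "S = 0")
    case True then show ?thesis using that[of 0] hi lo by auto
  next
    case False
    then have "S > 0" using S0 by simp
    show ?thesis
    proof (rule that[of "(A - cos ga) / S"])
      show "-1 \<le> (A - cos ga) / S" using \<open>S > 0\<close> hi by (simp add: field_simps)
      show "(A - cos ga) / S \<le> 1" using \<open>S > 0\<close> lo by (simp add: field_simps)
      show "A - S * ((A - cos ga) / S) = cos ga" using \<open>S > 0\<close> by (simp add: field_simps)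
    qed
  qed
  define p where "p = (cos al, vector [sin al, 0, 0] :: real^3)"
  define q where "q = (cos be, vector [sin be * t, sin be * sqrt (1 - t*t), 0] :: real^3)"
  have "t*t \<le> 1" using t abs_square_le_1[of t] by (simp add: power2_eq_square abs_le_iff)
  then have tt: "sqrt (1 - t*t) * sqrt (1 - t*t) = 1 - t*t"
    by (simp add: real_sqrt_mult_self)
  have "qn p = 1" by (simp add: p_def qn_def inner_vec_def sum_3 power2_eq_square[symmetric])
  moreover have "qn q = 1"
  proof -
    have "qn q = (cos be)\<^sup>2 + (sin be)\<^sup>2 * (t * t + sqrt (1 - t*t) * sqrt (1 - t*t))"
      by (simp add: q_def qn_def inner_vec_def sum_3 power2_eq_square algebra_simps)
    then show ?thesis using tt by simp
  qed
  moreover have "fst (qmul p q) = cos ga"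
    using t(3) by (simp add: p_def q_def qmul_def inner_vec_def sum_3 A_def S_def algebra_simps)
  ultimately have "phi p q = (pi - arccos (cos al), arccos (cos be), arccos (cos ga))"
    by (simp add: phi_def p_def q_def)
  also have "\<dots> = (pi - al, be, ga)" using arccos_cos[OF a] arccos_cos[OF b] arccos_cos[OF g] by simp
  also have "\<dots> = th" by (simp add: th al_def be_def ga_def)
  finally show ?thesis using \<open>qn p = 1\<close> \<open>qn q = 1\<close> by blast
qed


lemma qmul_neg: "qmul (-p) q = - qmul p q" "qmul p (-q) = - qmul p q"
  by (simp_all add: qmul_def cross3_def vec_eq_iff forall_3 vector_3 algebra_simps)

lemma qn_neg: "qn (-p) = qn p" by (simp add: qn_def)

lemma phi_flip:
  assumes p: "qn p = 1" and q: "qn q = 1"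
  shows "phi (-p) q = I_B (phi p q)" "phi p (-q) = I_A (phi p q)" "phi (-p) (-q) = I_C (phi p q)"
proof -
  have pb: "-1 \<le> fst p" "fst p \<le> 1" using fst_bound[OF p] by auto
  have qb: "-1 \<le> fst q" "fst q \<le> 1" using fst_bound[OF q] by auto
  have cb: "-1 \<le> fst (qmul p q)" "fst (qmul p q) \<le> 1" using fst_bound[of "qmul p q"] qn_mul[of p q] p q by auto
  show "phi (-p) q = I_B (phi p q)" "phi p (-q) = I_A (phi p q)" "phi (-p) (-q) = I_C (phi p q)"
    by (simp_all add: phi_def I_A_def I_B_def I_C_def qmul_neg arccos_minus pb qb cb)
qed

lemma phi_eq:
  assumes "qn p = 1" "qn q = 1" "qn p' = 1" "qn q' = 1" and e: "phi p q = phi p' q'"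
  shows "fst p = fst p'" "fst q = fst q'" "fst (qmul p q) = fst (qmul p' q')"
proof -
  have b: "-1 \<le> fst p" "fst p \<le> 1" "-1 \<le> fst q" "fst q \<le> 1" "-1 \<le> fst p'" "fst p' \<le> 1" "-1 \<le> fst q'" "fst q' \<le> 1"
    using fst_bound assms(1-4) by auto
  have c: "-1 \<le> fst (qmul p q)" "fst (qmul p q) \<le> 1" "-1 \<le> fst (qmul p' q')" "fst (qmul p' q') \<le> 1"
    using fst_bound[of "qmul p q"] fst_bound[of "qmul p' q'"] qn_mul assms(1-4) by auto
  have e1: "arccos (fst p) = arccos (fst p')" "arccos (fst q) = arccos (fst q')"
    "arccos (fst (qmul p q)) = arccos (fst (qmul p' q'))" using e by (auto simp: phi_def)
  show "fst p = fst p'" using arg_cong[OF e1(1), of cos] b by simp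
  show "fst q = fst q'" using arg_cong[OF e1(2), of cos] b by simp
  show "fst (qmul p q) = fst (qmul p' q')" using arg_cong[OF e1(3), of cos] c by simp
qed

lemma conj_fst: "qn s = 1 \<Longrightarrow> fst (qmul (qmul s p) (qcnj s)) = fst p"
  using conj_qmul[of s "fst p" "snd p"] by simp

lemma conj_prod: "qn s = 1 \<Longrightarrow>
  qmul (qmul (qmul s p) (qcnj s)) (qmul (qmul s q) (qcnj s)) = qmul (qmul s (qmul p q)) (qcnj s)"
proof -
  assume s: "qn s = 1"
  have "qmul (qmul (qmul s p) (qcnj s)) (qmul (qmul s q) (qcnj s)) =
        qmul (qmul s p) (qmul (qmul (qcnj s) s) (qmul q (qcnj s)))" by (simp add: qmul_assoc)
  also have "\<dots> = qmul (qmul s (qmul p q)) (qcnj s)" using s by (simp add: qmul_cnj qmul_one qmul_assoc)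
  finally show ?thesis .
qed

lemma phi_conj: "qn s = 1 \<Longrightarrow> phi (qmul (qmul s p) (qcnj s)) (qmul (qmul s q) (qcnj s)) = phi p q"
  by (simp add: phi_def conj_prod conj_fst)

lemma I_simps: "I_A (a,b,c) = (a, pi - b, pi - c)" "I_B (a,b,c) = (pi - a, b, pi - c)" "I_C (a,b,c) = (pi - a, pi - b, c)"
  by (simp_all add: I_A_def I_B_def I_C_def)

lemma klein_refl: "klein_rel x x" by (simp add: klein_rel_def)
lemma klein_sym: "klein_rel x y \<Longrightarrow> klein_rel y x"
  by (cases x) (auto simp: klein_rel_def I_simps)
lemma klein_trans: "klein_rel x y \<Longrightarrow> klein_rel y z \<Longrightarrow> klein_rel x z"
  by (cases x) (auto simp: klein_rel_def I_simps)

lemma klein_signs: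
  assumes "qn p = 1" "qn q = 1" "p1 = p \<or> p1 = -p" "q1 = q \<or> q1 = -q"
  shows "klein_rel (phi p q) (phi p1 q1)"
  using assms phi_flip[OF assms(1,2)] by (auto simp: klein_rel_def)

lemma klein_phi_cases:
  assumes "qn p = 1" "qn q = 1" "klein_rel (phi p q) y"
  shows "\<exists>p1 q1. (p1 = p \<or> p1 = -p) \<and> (q1 = q \<or> q1 = -q) \<and> y = phi p1 q1"
  using assms phi_flip[OF assms(1,2)] unfolding klein_rel_def by (metis insertE singletonD)

lemma openin_quot: "openin (quotient_topology X r) = (\<lambda>U. U \<subseteq> rel_class X r ` topspace X \<and>
      openin X {x \<in> topspace X. rel_class X r x \<in> U})"
  unfolding quotient_topology_def by (rule topology_inverse'[OF istopology_quotient])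

lemma topspace_quot: "topspace (quotient_topology X r) = rel_class X r ` topspace X"
proof -
  have "{x \<in> topspace X. rel_class X r x \<in> rel_class X r ` topspace X} = topspace X" by blast
  then have "openin (quotient_topology X r) (rel_class X r ` topspace X)"
    unfolding openin_quot by simp
  then have "rel_class X r ` topspace X \<subseteq> topspace (quotient_topology X r)"
    by (rule openin_subset)
  moreover have "topspace (quotient_topology X r) \<subseteq> rel_class X r ` topspace X"
    unfolding topspace_def openin_quot by blast
  ultimately show ?thesis by blast
qed

lemma quotient_map_quot: "quotient_map X (quotient_topology X r) (rel_class X r)"
  unfolding quotient_map_def topspace_quot
proof (intro conjI allI impI)
  fix U assume "U \<subseteq> rel_class X r ` topspace X"
  then show "openin X {x \<in> topspace X. rel_class X r x \<in> U} = openin (quotient_topology X r) U"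
    unfolding openin_quot by simp
qed simp

lemma compact_quot: assumes "compact_space X" shows "compact_space (quotient_topology X r)"
proof -
  have "compactin (quotient_topology X r) (rel_class X r ` topspace X)"
    using assms unfolding compact_space_def
    by (rule image_compactin[OF _ quotient_imp_continuous_map[OF quotient_map_quot]])
  then show ?thesis by (simp add: compact_space_def topspace_quot)
qed

lemma Hausdorff_quot:
  assumes g: "continuous_map Y Z g" and HZ: "Hausdorff_space Z"
    and compat: "\<And>y y'. y \<in> topspace Y \<Longrightarrow> y' \<in> topspace Y \<Longrightarrow>
        rel_class Y s y = rel_class Y s y' \<longleftrightarrow> g y = g y'"
  shows "Hausdorff_space (quotient_topology Y s)"
  unfolding Hausdorff_space_def
proof (intro allI impI, elim conjE)
  fix c1 c2 assume c1: "c1 \<in> topspace (quotient_topology Y s)"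
    and c2: "c2 \<in> topspace (quotient_topology Y s)" and ne: "c1 \<noteq> c2"
  obtain y1 where y1: "y1 \<in> topspace Y" "c1 = rel_class Y s y1" using c1 by (auto simp: topspace_quot)
  obtain y2 where y2: "y2 \<in> topspace Y" "c2 = rel_class Y s y2" using c2 by (auto simp: topspace_quot)
  have "g y1 \<noteq> g y2" using compat y1 y2 ne by auto
  moreover have "g y1 \<in> topspace Z" "g y2 \<in> topspace Z" using g y1 y2 by (auto simp: continuous_map_def)
  ultimately obtain U1 U2 where U: "openin Z U1" "openin Z U2" "g y1 \<in> U1" "g y2 \<in> U2" "disjnt U1 U2"
    using HZ unfolding Hausdorff_space_def by blast
  define W where "W U = {c. \<exists>y\<in>topspace Y. c = rel_class Y s y \<and> g y \<in> U}" for U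
  have pre: "{x \<in> topspace Y. rel_class Y s x \<in> W U} = {x \<in> topspace Y. g x \<in> U}" for U
  proof (intro set_eqI iffI)
    fix x assume "x \<in> {x \<in> topspace Y. rel_class Y s x \<in> W U}"
    then obtain y where "x \<in> topspace Y" "y \<in> topspace Y" "rel_class Y s x = rel_class Y s y" "g y \<in> U"
      unfolding W_def by blast
    then show "x \<in> {x \<in> topspace Y. g x \<in> U}" using compat[of x y] by simp
  next
    fix x assume "x \<in> {x \<in> topspace Y. g x \<in> U}"
    then show "x \<in> {x \<in> topspace Y. rel_class Y s x \<in> W U}" unfolding W_def by blast
  qed
  have op: "openin (quotient_topology Y s) (W U)" if "openin Z U" for U
    unfolding openin_quot
  proof
    show "W U \<subseteq> rel_class Y s ` topspace Y" unfolding W_def by auto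
    show "openin Y {x \<in> topspace Y. rel_class Y s x \<in> W U}"
      unfolding pre using g that by (simp add: continuous_map_def)
  qed
  have "disjnt (W U1) (W U2)"
    unfolding disjnt_def
  proof (rule equals0I)
    fix c assume "c \<in> W U1 \<inter> W U2"
    then have "c \<in> W U1" "c \<in> W U2" by auto
    then obtain z1 z2 where z: "z1 \<in> topspace Y" "z2 \<in> topspace Y" "c = rel_class Y s z1" "g z1 \<in> U1"
      "c = rel_class Y s z2" "g z2 \<in> U2" unfolding W_def by blast
    then have "g z1 = g z2" using compat[of z1 z2] by simp
    then show False using z U(5) by (auto simp: disjnt_def)
  qed
  moreover have "c1 \<in> W U1" "c2 \<in> W U2" unfolding W_def using y1 y2 U by auto
  ultimately show "\<exists>U V. openin (quotient_topology Y s) U \<and> openin (quotient_topology Y s) V \<and>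
      c1 \<in> U \<and> c2 \<in> V \<and> disjnt U V" using op U by blast
qed

lemma quot_homeo:
  assumes cX: "compact_space X"
    and HQ: "Hausdorff_space Q"
    and k: "continuous_map X Q k"
    and compat: "\<And>x x'. x \<in> topspace X \<Longrightarrow> x' \<in> topspace X \<Longrightarrow>
        rel_class X r x = rel_class X r x' \<longleftrightarrow> k x = k x'"
    and surj: "k ` topspace X = topspace Q"
  shows "quotient_topology X r homeomorphic_space Q"
proof -
  define h where "h c = k (SOME x. x \<in> topspace X \<and> rel_class X r x = c)" for c
  have hk: "h (rel_class X r x) = k x" if "x \<in> topspace X" for x
  proof -
    have "\<exists>x'. x' \<in> topspace X \<and> rel_class X r x' = rel_class X r x" using that by blast
    then have "(SOME x'. x' \<in> topspace X \<and> rel_class X r x' = rel_class X r x) \<in> topspace X \<and>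
       rel_class X r (SOME x'. x' \<in> topspace X \<and> rel_class X r x' = rel_class X r x) = rel_class X r x"
      by (rule someI_ex)
    then show ?thesis unfolding h_def using compat that by blast
  qed
  have cont: "continuous_map (quotient_topology X r) Q h"
  proof (rule continuous_compose_quotient_map[OF quotient_map_quot])
    show "continuous_map X Q (h \<circ> rel_class X r)"
      using k by (rule continuous_map_eq) (simp add: hk)
  qed
  have img: "h ` topspace (quotient_topology X r) = topspace Q"
  proof -
    have "h ` (rel_class X r ` topspace X) = k ` topspace X" using hk by (force simp: image_iff)
    then show ?thesis unfolding topspace_quot using surj by simp
  qed
  have inj: "inj_on h (topspace (quotient_topology X r))"
    unfolding topspace_quot inj_on_def using hk compat by auto
  have "homeomorphic_map (quotient_topology X r) Q h"
    by (rule bijective_closed_imp_homeomorphic_map[OF cont _ img inj])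
       (rule continuous_imp_closed_map[OF cont compact_quot[OF cX] HQ])
  then show ?thesis by (rule homeomorphic_map_imp_homeomorphic_space)
qed

definition S3 :: "quat set" where "S3 = {p. qn p = 1}"
definition SS :: "(quat \<times> quat) set" where "SS = Sigma S3 (\<lambda>_. S3)"
definition rho :: "quat \<times> quat \<Rightarrow> mat3 \<times> mat3 \<times> mat3" where
  "rho pq = (Rm (fst pq), Rm (snd pq), Rm (qcnj (qmul (fst pq) (snd pq))))"
definition Lf :: "mat3 \<Rightarrow> quat" where "Lf M = (SOME p. qn p = 1 \<and> Rm p = M)"
definition Phi :: "mat3 \<times> mat3 \<times> mat3 \<Rightarrow> real \<times> real \<times> real" where
  "Phi h = phi (Lf (fst h)) (Lf (fst (snd h)))"

lemma Lf_prop: "M \<in> SO3 \<Longrightarrow> qn (Lf M) = 1 \<and> Rm (Lf M) = M"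
  unfolding Lf_def by (rule someI_ex) (rule lift_all)

lemma Lf_Rm: assumes p: "qn p = 1" shows "Lf (Rm p) = p \<or> Lf (Rm p) = - p"
proof -
  have l: "qn (Lf (Rm p)) = 1" "Rm (Lf (Rm p)) = Rm p" using Lf_prop[OF Rm_SO3[OF p]] by auto
  show ?thesis by (rule Rm_inj[OF p l(1) l(2)[symmetric]])
qed

lemma qcnj_neg: "qcnj (- x) = - qcnj x" by (simp add: qcnj_def)

lemma Rm_neg: "Rm (- p) = Rm p"
  using Rm_scale[of "-1" p] by simp

lemma rho_hom: "qn p = 1 \<Longrightarrow> qn q = 1 \<Longrightarrow> rho (p, q) \<in> hom_pants_SO3"
proof -
  assume p: "qn p = 1" and q: "qn q = 1"
  have pq: "qn (qmul p q) = 1" by (simp add: qn_mul p q)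
  have "Rm p ** Rm q ** Rm (qcnj (qmul p q)) = Rm (qmul p q) ** Rm (qcnj (qmul p q))"
    by (simp add: Rm_mul)
  also have "\<dots> = mat 1" by (rule Rm_orth(2)[OF pq])
  finally have "Rm p ** Rm q ** Rm (qcnj (qmul p q)) = mat 1" .
  then show ?thesis unfolding hom_pants_SO3_def rho_def
    using Rm_SO3 p q pq qn_cnj by auto
qed

lemma hom_rho:
  assumes h: "h \<in> hom_pants_SO3"
  shows "qn (Lf (fst h)) = 1" "qn (Lf (fst (snd h))) = 1" "h = rho (Lf (fst h), Lf (fst (snd h)))"
proof -
  obtain A B C where abc: "h = (A, B, C)" "A \<in> SO3" "B \<in> SO3" "C \<in> SO3" "A ** B ** C = mat 1"
    using h unfolding hom_pants_SO3_def by auto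
  define p where "p = Lf A"
  define q where "q = Lf B"
  have p: "qn p = 1" "Rm p = A" using Lf_prop[OF abc(2)] p_def by auto
  have q: "qn q = 1" "Rm q = B" using Lf_prop[OF abc(3)] q_def by auto
  have pq: "qn (qmul p q) = 1" by (simp add: qn_mul p q)
  have AB: "A ** B = Rm (qmul p q)" by (simp add: Rm_mul p q)
  have "C = (Rm (qcnj (qmul p q)) ** Rm (qmul p q)) ** C" by (simp add: Rm_orth[OF pq])
  also have "\<dots> = Rm (qcnj (qmul p q)) ** (A ** B ** C)" by (simp add: matrix_mul_assoc AB)
  also have "\<dots> = Rm (qcnj (qmul p q))" by (simp add: abc(5))
  finally have C: "C = Rm (qcnj (qmul p q))" .
  show "qn (Lf (fst h)) = 1" "qn (Lf (fst (snd h))) = 1" using p q abc(1) p_def q_def by auto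
  show "h = rho (Lf (fst h), Lf (fst (snd h)))"
    using abc(1) p q C p_def q_def by (simp add: rho_def)
qed

lemma hom_eq: "hom_pants_SO3 = rho ` SS"
proof
  show "hom_pants_SO3 \<subseteq> rho ` SS"
  proof
    fix h assume h: "h \<in> hom_pants_SO3"
    have "(Lf (fst h), Lf (fst (snd h))) \<in> SS" using hom_rho[OF h] by (simp add: SS_def S3_def)
    then show "h \<in> rho ` SS" by (rule image_eqI[of h rho "(Lf (fst h), Lf (fst (snd h)))" SS, OF hom_rho(3)[OF h]])
  qed
  show "rho ` SS \<subseteq> hom_pants_SO3" unfolding SS_def S3_def using rho_hom by auto
qed

lemma Phi_rho: "qn p = 1 \<Longrightarrow> qn q = 1 \<Longrightarrow> klein_rel (phi p q) (Phi (rho (p, q)))"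
  unfolding Phi_def rho_def by (simp add: klein_signs Lf_Rm)

lemma conj_iff:
  assumes p: "qn p = 1" and q: "qn q = 1" and p': "qn p' = 1" and q': "qn q' = 1"
  shows "conj_rel (rho (p, q)) (rho (p', q')) \<longleftrightarrow> klein_rel (phi p q) (phi p' q')"
proof
  assume "conj_rel (rho (p, q)) (rho (p', q'))"
  then obtain g where g: "g \<in> SO3" "Rm p' = g ** Rm p ** matrix_inv g" "Rm q' = g ** Rm q ** matrix_inv g"
    unfolding conj_rel_def rho_def by auto
  obtain s where s: "qn s = 1" "Rm s = g" using lift_all[OF g(1)] by blast
  have gi: "matrix_inv g = Rm (qcnj s)" using SO3_inv[OF g(1)] unfolding s(2)[symmetric] by (simp add: transpose_Rm)
  have n1: "qn (qmul (qmul s p) (qcnj s)) = 1" "qn (qmul (qmul s q) (qcnj s)) = 1"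
    by (simp_all add: qn_mul qn_cnj s p q)
  have "Rm p' = Rm (qmul (qmul s p) (qcnj s))" using g(2) s gi by (simp add: Rm_mul)
  then have e1: "p' = qmul (qmul s p) (qcnj s) \<or> p' = - qmul (qmul s p) (qcnj s)" using Rm_inj[OF n1(1) p'] by metis
  have "Rm q' = Rm (qmul (qmul s q) (qcnj s))" using g(3) s gi by (simp add: Rm_mul)
  then have e2: "q' = qmul (qmul s q) (qcnj s) \<or> q' = - qmul (qmul s q) (qcnj s)" using Rm_inj[OF n1(2) q'] by metis
  have "klein_rel (phi (qmul (qmul s p) (qcnj s)) (qmul (qmul s q) (qcnj s))) (phi p' q')"
    by (rule klein_signs[OF n1 e1 e2])
  then show "klein_rel (phi p q) (phi p' q')" using phi_conj[OF s(1)] by simp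
next
  assume k: "klein_rel (phi p q) (phi p' q')"
  obtain p1 q1 where pq1: "p1 = p \<or> p1 = -p" "q1 = q \<or> q1 = -q" "phi p' q' = phi p1 q1"
    using klein_phi_cases[OF p q k] by blast
  have n1: "qn p1 = 1" "qn q1 = 1" using pq1(1,2) p q by (auto simp only: qn_neg)
  note E = phi_eq[OF p' q' n1 pq1(3)]
  obtain s where s: "qn s = 1" "p' = qmul (qmul s p1) (qcnj s)" "q' = qmul (qmul s q1) (qcnj s)"
    using conj_classify[OF n1 p' q' E(1)[symmetric] E(2)[symmetric] E(3)[symmetric]] by blast
  have gi: "matrix_inv (Rm s) = Rm (qcnj s)" using SO3_inv[OF Rm_SO3[OF s(1)]] by (simp add: transpose_Rm)
  have Rp1: "Rm p1 = Rm p" "Rm q1 = Rm q" by (metis pq1(1) Rm_neg) (metis pq1(2) Rm_neg)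
  have "qmul p1 q1 = qmul p q \<or> qmul p1 q1 = - qmul p q" using pq1 by (auto simp: qmul_neg)
  then have Rpq: "Rm (qcnj (qmul p1 q1)) = Rm (qcnj (qmul p q))"
    by (elim disjE) (simp_all add: qcnj_neg Rm_neg)
  have cc: "qcnj (qmul (qmul s x) (qcnj s)) = qmul (qmul s (qcnj x)) (qcnj s)" for x
    by (simp add: qcnj_mul qmul_assoc) (simp add: qcnj_def)
  have "rho (p', q') = (Rm s ** Rm p ** matrix_inv (Rm s), Rm s ** Rm q ** matrix_inv (Rm s),
      Rm s ** Rm (qcnj (qmul p q)) ** matrix_inv (Rm s))"
  proof -
    have "qmul p' q' = qmul (qmul s (qmul p1 q1)) (qcnj s)" using conj_prod[OF s(1)] s(2,3) by simp
    then have "Rm (qcnj (qmul p' q')) = Rm s ** Rm (qcnj (qmul p q)) ** Rm (qcnj s)"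
      by (simp add: cc Rm_mul Rpq)
    moreover have "Rm p' = Rm s ** Rm p ** Rm (qcnj s)" "Rm q' = Rm s ** Rm q ** Rm (qcnj s)"
      using s(2,3) by (simp_all add: Rm_mul Rp1)
    ultimately show ?thesis unfolding rho_def gi by simp
  qed
  then show "conj_rel (rho (p, q)) (rho (p', q'))"
    unfolding conj_rel_def using Rm_SO3[OF s(1)] by (auto simp: rho_def)
qed


lemma qn_norm: "qn p = (norm p)\<^sup>2"
proof -
  obtain a b where p: "p = (a, b)" by (cases p) auto
  have "(norm p)\<^sup>2 = a\<^sup>2 + (norm b)\<^sup>2" by (simp add: p norm_Pair)
  moreover have "b \<bullet> b = (norm b)\<^sup>2" by (simp add: dot_square_norm)
  ultimately show ?thesis by (simp add: qn_def p power2_eq_square)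
qed

lemma S3_sphere: "S3 = sphere 0 1"
proof -
  have "qn p = 1 \<longleftrightarrow> norm p = 1" for p
  proof
    assume "qn p = 1"
    then have "norm p = 1 \<or> norm p = -1" using qn_norm[of p] by (simp add: power2_eq_1_iff)
    then show "norm p = 1" using norm_ge_zero[of p] by linarith
  qed (simp add: qn_norm)
  then show ?thesis unfolding S3_def by (auto simp: mem_sphere_0)
qed

lemma compact_SS: "compact SS"
  unfolding SS_def S3_sphere by (intro compact_Times compact_sphere)

lemma cont_cross: "continuous_on S a \<Longrightarrow> continuous_on S b \<Longrightarrow> continuous_on S (\<lambda>x. cross3 (a x) (b x))"
  for S :: "'z::t2_space set"
  by (rule continuous_on_cross)

lemma cont_Rm: "continuous_on S f \<Longrightarrow> continuous_on S (\<lambda>x. Rm (f x))" for S :: "'z::t2_space set"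
  unfolding Rm_def matrix_def rotv_def
  by (intro continuous_intros cont_cross)

lemma cont_qmul: "continuous_on S f \<Longrightarrow> continuous_on S g \<Longrightarrow> continuous_on S (\<lambda>x. qmul (f x) (g x))"
  for S :: "'z::t2_space set"
  unfolding qmul_def by (intro continuous_intros cont_cross)

lemma cont_qcnj: "continuous_on S f \<Longrightarrow> continuous_on S (\<lambda>x. qcnj (f x))"
  unfolding qcnj_def by (intro continuous_intros)

lemma cont_rho: "continuous_on S rho"
  unfolding rho_def by (intro continuous_intros cont_Rm cont_qcnj cont_qmul)

lemma SS_bounds: "x \<in> SS \<Longrightarrow> -1 \<le> fst (fst x) \<and> fst (fst x) \<le> 1 \<and> -1 \<le> fst (snd x) \<and> fst (snd x) \<le> 1
   \<and> -1 \<le> fst (qmul (fst x) (snd x)) \<and> fst (qmul (fst x) (snd x)) \<le> 1"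
proof -
  assume "x \<in> SS"
  then have p: "qn (fst x) = 1" "qn (snd x) = 1" by (auto simp: SS_def S3_def)
  have "qn (qmul (fst x) (snd x)) = 1" by (simp add: qn_mul p)
  then show ?thesis using fst_bound[OF p(1)] fst_bound[OF p(2)] fst_bound[of "qmul (fst x) (snd x)"] by simp
qed

lemma cont_phi: "continuous_on SS (\<lambda>x. phi (fst x) (snd x))"
proof -
  have "continuous_on SS (\<lambda>x. fst (qmul (fst x) (snd x)))"
    by (intro continuous_intros cont_qmul)
  then show ?thesis unfolding phi_def
    by (intro continuous_intros cont_qmul) (use SS_bounds in auto)
qed

lemma cls_eq:
  assumes refl: "\<And>x. x \<in> topspace X \<Longrightarrow> r x x"
    and sym: "\<And>x y. x \<in> topspace X \<Longrightarrow> y \<in> topspace X \<Longrightarrow> r x y \<Longrightarrow> r y x"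
    and trans: "\<And>x y z. x \<in> topspace X \<Longrightarrow> y \<in> topspace X \<Longrightarrow> z \<in> topspace X \<Longrightarrow> r x y \<Longrightarrow> r y z \<Longrightarrow> r x z"
    and x: "x \<in> topspace X" and y: "y \<in> topspace X"
  shows "rel_class X r x = rel_class X r y \<longleftrightarrow> r x y"
proof
  assume e: "rel_class X r x = rel_class X r y"
  have "y \<in> rel_class X r y" using refl y by (simp add: rel_class_def)
  then have "y \<in> rel_class X r x" using e by simp
  then show "r x y" by (simp add: rel_class_def)
next
  assume xy: "r x y"
  show "rel_class X r x = rel_class X r y"
    unfolding rel_class_def using xy sym trans x y by blast
qed

definition kcls :: "real \<times> real \<times> real \<Rightarrow> (real \<times> real \<times> real) set" where
  "kcls = rel_class (top_of_set tetG) klein_rel"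

lemma kcls_eq: "x \<in> tetG \<Longrightarrow> y \<in> tetG \<Longrightarrow> kcls x = kcls y \<longleftrightarrow> klein_rel x y"
  unfolding kcls_def
  by (rule cls_eq) (auto intro: klein_refl klein_sym klein_trans)

lemma Phi_in: "h \<in> hom_pants_SO3 \<Longrightarrow> Phi h \<in> tetG"
  unfolding Phi_def using hom_rho by (intro phi_in) auto

lemma conj_hom: assumes h: "h \<in> hom_pants_SO3" and h': "h' \<in> hom_pants_SO3"
  shows "conj_rel h h' \<longleftrightarrow> klein_rel (Phi h) (Phi h')"
proof -
  have "conj_rel h h' = conj_rel (rho (Lf (fst h), Lf (fst (snd h)))) (rho (Lf (fst h'), Lf (fst (snd h'))))"
    by (rule arg_cong2[OF hom_rho(3)[OF h] hom_rho(3)[OF h']])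
  also have "\<dots> = klein_rel (Phi h) (Phi h')"
    unfolding Phi_def by (rule conj_iff) (use hom_rho h h' in auto)
  finally show ?thesis .
qed

lemma conj_cls_eq: "h \<in> hom_pants_SO3 \<Longrightarrow> h' \<in> hom_pants_SO3 \<Longrightarrow>
  rel_class (top_of_set hom_pants_SO3) conj_rel h = rel_class (top_of_set hom_pants_SO3) conj_rel h' \<longleftrightarrow> conj_rel h h'"
  by (rule cls_eq) (auto simp: conj_hom Phi_in intro: klein_refl klein_sym klein_trans)

definition kk :: "mat3 \<times> mat3 \<times> mat3 \<Rightarrow> (real \<times> real \<times> real) set" where "kk h = kcls (Phi h)"

lemma kk_rho: assumes "x \<in> SS" shows "kk (rho x) = kcls (phi (fst x) (snd x))"
proof -
  have p: "qn (fst x) = 1" "qn (snd x) = 1" using assms by (auto simp: SS_def S3_def)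
  have h: "rho x \<in> hom_pants_SO3" using rho_hom[OF p] by simp
  have "klein_rel (phi (fst x) (snd x)) (Phi (rho x))" using Phi_rho[OF p] by simp
  then show ?thesis unfolding kk_def using kcls_eq[OF phi_in[OF p] Phi_in[OF h]] by simp
qed

lemma cont_kk: "continuous_map (top_of_set hom_pants_SO3) tetG_mod_V kk"
proof -
  have qm: "quotient_map (top_of_set SS) (top_of_set hom_pants_SO3) rho"
  proof (rule continuous_imp_quotient_map)
    show "continuous_map (top_of_set SS) (top_of_set hom_pants_SO3) rho"
      using cont_rho hom_eq by auto
    show "compact_space (top_of_set SS)" by (simp add: compact_space_subtopology compact_SS)
    show "Hausdorff_space (top_of_set hom_pants_SO3)" by (simp add: Hausdorff_space_subtopology)
    show "rho ` topspace (top_of_set SS) = topspace (top_of_set hom_pants_SO3)" by (simp add: hom_eq)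
  qed
  have c1: "continuous_map (top_of_set SS) (top_of_set tetG) (\<lambda>x. phi (fst x) (snd x))"
    using cont_phi phi_in by (auto simp: SS_def S3_def)
  have c2: "continuous_map (top_of_set tetG) tetG_mod_V kcls"
    unfolding tetG_mod_V_def kcls_def by (rule quotient_imp_continuous_map[OF quotient_map_quot])
  have "continuous_map (top_of_set SS) tetG_mod_V (kk \<circ> rho)"
    using continuous_map_compose[OF c1 c2] by (rule continuous_map_eq) (simp add: kk_rho)
  then show ?thesis by (rule continuous_compose_quotient_map[OF qm])
qed

lemma sign_lemma:
  fixes x y z x' y' z' :: real
  assumes "x'\<^sup>2 = x\<^sup>2" "y'\<^sup>2 = y\<^sup>2" "z'\<^sup>2 = z\<^sup>2" "x'*y'*z' = x*y*z"
  shows "(x'=x \<and> y'=y \<and> z'=z) \<or> (x'=x \<and> y'=-y \<and> z'=-z) \<or> (x'=-x \<and> y'=y \<and> z'=-z) \<or> (x'=-x \<and> y'=-y \<and> z'=z)"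
proof -
  have a: "x' = x \<or> x' = -x" "y' = y \<or> y' = -y" "z' = z \<or> z' = -z"
    using assms(1-3) by (simp_all add: power2_eq_iff)
  have z3: "x*y*z = -(x*y*z) \<Longrightarrow> x = 0 \<or> y = 0 \<or> z = 0" by simp
  show ?thesis using a assms(4) z3 by (elim disjE) auto
qed

definition sig :: "real \<times> real \<times> real \<Rightarrow> real \<times> real \<times> real \<times> real" where
  "sig x = ((fst x - pi/2)\<^sup>2, (fst (snd x) - pi/2)\<^sup>2, (snd (snd x) - pi/2)\<^sup>2,
     (fst x - pi/2) * (fst (snd x) - pi/2) * (snd (snd x) - pi/2))"

lemma klein_sig: "klein_rel a b \<longleftrightarrow> sig a = sig b"
proof -
  obtain a0 a1 a2 where a: "a = (a0, a1, a2)" by (cases a) auto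
  obtain b0 b1 b2 where b: "b = (b0, b1, b2)" by (cases b) auto
  have m: "pi - t - pi/2 = - (t - pi/2)" for t :: real by simp
  show ?thesis
  proof
    assume "klein_rel a b"
    then have "b = a \<or> b = I_A a \<or> b = I_B a \<or> b = I_C a" by (simp add: klein_rel_def)
    then show "sig a = sig b"
      unfolding a by (elim disjE) (simp_all only: sig_def I_simps fst_conv snd_conv m power2_minus mult_minus_left mult_minus_right minus_minus)
  next
    assume "sig a = sig b"
    then have e: "(b0 - pi/2)\<^sup>2 = (a0 - pi/2)\<^sup>2" "(b1 - pi/2)\<^sup>2 = (a1 - pi/2)\<^sup>2" "(b2 - pi/2)\<^sup>2 = (a2 - pi/2)\<^sup>2"
      "(b0 - pi/2) * (b1 - pi/2) * (b2 - pi/2) = (a0 - pi/2) * (a1 - pi/2) * (a2 - pi/2)"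
      by (simp_all add: a b sig_def)
    from sign_lemma[OF e] show "klein_rel a b"
      unfolding klein_rel_def a b by (elim disjE) (auto simp: I_simps)
  qed
qed

lemma Hausdorff_tet: "Hausdorff_space tetG_mod_V"
  unfolding tetG_mod_V_def
proof (rule Hausdorff_quot[where g = sig and Z = euclidean])
  show "continuous_map (top_of_set tetG) euclidean sig"
    unfolding sig_def by (simp, intro continuous_intros)
  show "Hausdorff_space (euclidean :: (real \<times> real \<times> real \<times> real) topology)" by simp
  fix y y' assume "y \<in> topspace (top_of_set tetG)" "y' \<in> topspace (top_of_set tetG)"
  then show "rel_class (top_of_set tetG) klein_rel y = rel_class (top_of_set tetG) klein_rel y' \<longleftrightarrow> sig y = sig y'"
    using kcls_eq[of y y'] by (simp add: kcls_def klein_sig)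
qed

lemma compact_hom: "compact hom_pants_SO3"
  unfolding hom_eq by (rule compact_continuous_image[OF cont_rho compact_SS])

theorem mainTheorem5:
  shows "rep_pants_SO3 homeomorphic_space tetG_mod_V"
  unfolding rep_pants_SO3_def
proof (rule quot_homeo[where k = kk])
  show "compact_space (top_of_set hom_pants_SO3)"
    by (simp add: compact_space_subtopology compact_hom)
  show "Hausdorff_space tetG_mod_V" by (rule Hausdorff_tet)
  show "continuous_map (top_of_set hom_pants_SO3) tetG_mod_V kk" by (rule cont_kk)
  fix x x' assume x: "x \<in> topspace (top_of_set hom_pants_SO3)" and x': "x' \<in> topspace (top_of_set hom_pants_SO3)"
  then have h: "x \<in> hom_pants_SO3" "x' \<in> hom_pants_SO3" by auto
  show "rel_class (top_of_set hom_pants_SO3) conj_rel x = rel_class (top_of_set hom_pants_SO3) conj_rel x' \<longleftrightarrow> kk x = kk x'"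
    unfolding kk_def conj_cls_eq[OF h] conj_hom[OF h] kcls_eq[OF Phi_in[OF h(1)] Phi_in[OF h(2)]] ..
next
  show "kk ` topspace (top_of_set hom_pants_SO3) = topspace tetG_mod_V"
    unfolding tetG_mod_V_def topspace_quot topspace_euclidean_subtopology kcls_def[symmetric]
  proof
    show "kk ` hom_pants_SO3 \<subseteq> kcls ` tetG" unfolding kk_def using Phi_in by auto
    show "kcls ` tetG \<subseteq> kk ` hom_pants_SO3"
    proof
      fix c assume "c \<in> kcls ` tetG"
      then obtain th where th: "th \<in> tetG" "c = kcls th" by auto
      obtain p q where pq: "qn p = 1" "qn q = 1" "phi p q = th" using phi_surj[OF th(1)] by blast
      have "(p, q) \<in> SS" using pq by (simp add: SS_def S3_def)
      then have "kk (rho (p, q)) = c" using kk_rho th pq by simp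
      moreover have "rho (p, q) \<in> hom_pants_SO3" by (rule rho_hom[OF pq(1,2)])
      ultimately show "c \<in> kk ` hom_pants_SO3" by (metis image_eqI)
    qed
  qed
qed

end
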